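(* Starting from any game state $G$, all game paths starting at $G$ that follow the Split-First Strategy have the same length.
   Context: Fibonacci numbers are indexed by $F_1=1$, $F_2=2$, $F_{i+1}=F_i+F_{i-1}$. A game state is a finite multiset of Fibonacci numbers (tracked by index). The legal moves are: $C_1$: replace $F_1,F_1$ by $F_2$; for $i\ge 2$, $C_i$: replace $F_{i-1},F_i$ by $F_{i+1}$ (a "combining move"); $S_2$: replace $F_2,F_2$ by $F_1,F_3$; for $i\ge 3$, $S_i$: replace $F_i,F_i$ by $F_{i-2},F_{i+1}$ (a "splitting move"). Here $C_1$ is grouped with the splitting moves, and "combining move" means $C_i$ with $i\ge 2$. Every sequence of legal moves is finite. A game path from a state $G$ is a sequence of legal moves starting at $G$ and continuing until no legal move is available; its length is its number of moves. A game path follows the Split-First Strategy if at each state along it: whenever some splitting move or $C_1$ is available, the move taken is one of those (any choice); otherwise the move taken is the combining move $C_i$ ($i\ge 2$) with the smallest index $i$ among those available. *)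

theory Defs
  imports Main "HOL-Library.Multiset"
begin

text \<open>A game state is a finite multiset of Fibonacci indices (each index \<ge> 1).
  Moves: C i (i \<ge> 1) and S i (i \<ge> 2).\<close>

datatype move = C nat | S nat

definition legal :: "nat multiset \<Rightarrow> move \<Rightarrow> bool" where
  "legal G m = (case m of
      C i \<Rightarrow> (i = 1 \<and> count G 1 \<ge> 2) \<or> (i \<ge> 2 \<and> count G (i - 1) \<ge> 1 \<and> count G i \<ge> 1)
    | S i \<Rightarrow> i \<ge> 2 \<and> count G i \<ge> 2)"

definition apply_move :: "nat multiset \<Rightarrow> move \<Rightarrow> nat multiset" where
  "apply_move G m = (case m of
      C i \<Rightarrow> (if i = 1 then G - {#1, 1#} + {#2#} else G - {#i - 1, i#} + {#i + 1#})
    | S i \<Rightarrow> (if i = 2 then G - {#2, 2#} + {#1, 3#} else G - {#i, i#} + {#i - 2, i + 1#}))"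

definition is_split :: "move \<Rightarrow> bool" where
  "is_split m = (case m of C i \<Rightarrow> i = 1 | S i \<Rightarrow> True)"

definition terminal :: "nat multiset \<Rightarrow> bool" where
  "terminal G = (\<not> (\<exists>m. legal G m))"

fun game_path :: "nat multiset \<Rightarrow> move list \<Rightarrow> bool" where
  "game_path G [] = terminal G"
| "game_path G (m # ms) = (legal G m \<and> game_path (apply_move G m) ms)"

fun split_first :: "nat multiset \<Rightarrow> move list \<Rightarrow> bool" where
  "split_first G [] = True"
| "split_first G (m # ms) =
     ((if \<exists>m'. legal G m' \<and> is_split m' then is_split m
       else m = C (LEAST i. i \<ge> 2 \<and> legal G (C i)))
      \<and> split_first (apply_move G m) ms)"

end

theory Submission
  imports Defs
begin

fun lp :: "nat multiset \<Rightarrow> move list \<Rightarrow> bool" where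
  "lp G [] = True"
| "lp G (m # ms) = (legal G m \<and> lp (apply_move G m) ms)"

definition sfmove :: "nat multiset \<Rightarrow> move \<Rightarrow> bool" where
  "sfmove G m = (if \<exists>m'. legal G m' \<and> is_split m' then is_split m
       else m = C (LEAST i. i \<ge> 2 \<and> legal G (C i)))"

lemma sf_cons: "split_first G (m # ms) = (sfmove G m \<and> split_first (apply_move G m) ms)"
  by (simp add: sfmove_def)

declare split_first.simps(2)[simp del]

lemma gp_app: "game_path G (xs @ ys) = (lp G xs \<and> game_path (foldl apply_move G xs) ys)"
  by (induction xs arbitrary: G) auto

lemma sf_app: "split_first G (xs @ ys) = (split_first G xs \<and> split_first (foldl apply_move G xs) ys)"
  by (induction xs arbitrary: G) (auto simp: sf_cons)

lemma lp_app: "lp G (xs @ ys) = (lp G xs \<and> lp (foldl apply_move G xs) ys)"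
  by (induction xs arbitrary: G) auto

lemma gp_lp: "game_path G xs \<Longrightarrow> lp G xs"
  using gp_app[of G xs "[]"] by simp

lemma gen: assumes "X1 + X2 \<subseteq># G" shows "G - X1 + Y1 - X2 + Y2 = G - X2 + Y2 - X1 + Y1"
proof -
  { fix a have "count X1 a + count X2 a \<le> count G a" using mset_subset_eq_count[OF assms, of a] by simp
    then have "count (G - X1 + Y1 - X2 + Y2) a = count (G - X2 + Y2 - X1 + Y1) a" by simp }
  then show ?thesis by (simp add: multiset_eq_iff)
qed
lemma gen2: assumes "X1 + X2 \<subseteq># G" shows "X2 \<subseteq># G - X1 + Y1"
proof -
  { fix a have "count X1 a + count X2 a \<le> count G a" using mset_subset_eq_count[OF assms, of a] by simp
    then have "count X2 a \<le> count (G - X1 + Y1) a" by simp }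
  then show ?thesis by (simp add: subseteq_mset_def)
qed
lemma two': "({#i, i#} \<subseteq># G) = (count G i \<ge> 2)"
proof
  assume "{#i, i#} \<subseteq># G" then show "count G i \<ge> 2" using mset_subset_eq_count[of "{#i,i#}" G i] by simp
next
  assume "count G i \<ge> 2" then show "{#i, i#} \<subseteq># G" unfolding subseteq_mset_def by simp
qed
lemma two: "i \<noteq> j \<Longrightarrow> count G i \<ge> 2 \<Longrightarrow> count G j \<ge> 2 \<Longrightarrow> {#i, i#} + {#j, j#} \<subseteq># G"
  unfolding subseteq_mset_def by auto

fun idx :: "move \<Rightarrow> nat" where "idx (C i) = i" | "idx (S i) = i"
fun ys :: "move \<Rightarrow> nat multiset" where
  "ys (C i) = {#2#}" | "ys (S i) = (if i = 2 then {#1,3#} else {#i-2,i+1#})"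

lemma nf: "is_split m \<Longrightarrow> legal G m \<Longrightarrow>
   apply_move G m = G - {#idx m, idx m#} + ys m \<and> count G (idx m) \<ge> 2"
  by (cases m) (auto simp: is_split_def legal_def apply_move_def)

lemma legal_iff: "is_split m \<Longrightarrow> legal G m \<Longrightarrow> legal H m = ({#idx m, idx m#} \<subseteq># H)"
  by (cases m) (auto simp: is_split_def legal_def two')

lemma idx_inj: "is_split a \<Longrightarrow> legal G a \<Longrightarrow> is_split b \<Longrightarrow> legal G' b \<Longrightarrow> a \<noteq> b \<Longrightarrow> idx a \<noteq> idx b"
  by (cases a; cases b) (auto simp: is_split_def legal_def)

lemma commute:
  assumes "legal G a" "legal G b" "is_split a" "is_split b" "a \<noteq> b"
  shows "legal (apply_move G a) b \<and> apply_move (apply_move G a) b = apply_move (apply_move G b) a"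
proof -
  have na: "apply_move G a = G - {#idx a, idx a#} + ys a" "count G (idx a) \<ge> 2" using nf[OF assms(3,1)] by auto
  have nb: "apply_move G b = G - {#idx b, idx b#} + ys b" "count G (idx b) \<ge> 2" using nf[OF assms(4,2)] by auto
  have s: "{#idx a, idx a#} + {#idx b, idx b#} \<subseteq># G"
    using two[OF idx_inj[OF assms(3,1,4,2,5)] na(2) nb(2)] .
  have l: "legal (apply_move G a) b"
    using legal_iff[OF assms(4,2)] gen2[OF s] na(1) by simp
  have l2: "legal (apply_move G b) a"
    using legal_iff[OF assms(3,1)] gen2[of "{#idx b, idx b#}" "{#idx a, idx a#}" G "ys b"] s nb(1)
    by (simp add: add.commute)
  have "apply_move (apply_move G a) b = G - {#idx a, idx a#} + ys a - {#idx b, idx b#} + ys b"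
    using nf[OF assms(4) l] na(1) by simp
  also have "\<dots> = G - {#idx b, idx b#} + ys b - {#idx a, idx a#} + ys a" using gen[OF s] .
  also have "\<dots> = apply_move (apply_move G b) a"
    using nf[OF assms(3) l2] nb(1) by simp
  finally show ?thesis using l by simp
qed
lemma sf_unique:
  assumes "sfmove G a" "sfmove G b" "a \<noteq> b"
  shows "\<exists>m'. legal G m' \<and> is_split m'"
  using assms by (auto simp: sfmove_def split: if_splits)

lemma sf_split: "legal G m \<Longrightarrow> is_split m \<Longrightarrow> sfmove G m"
  by (auto simp: sfmove_def)

lemma main:
  "\<forall>G p. length p = n \<and> game_path G p \<and> split_first G p \<longrightarrow>
     (\<forall>ms. lp G ms \<and> split_first G ms \<longrightarrow>
        (\<exists>e. game_path G (ms @ e) \<and> split_first G (ms @ e) \<and> length (ms @ e) = n))"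
proof (induction n)
  case 0
  then show ?case
    apply clarsimp
    subgoal for G ms by (cases ms) (auto simp: terminal_def)
    done
next
  case (Suc n)
  show ?case
  proof (intro allI impI)
    fix G p ms
    assume h: "length p = Suc n \<and> game_path G p \<and> split_first G p" and hm: "lp G ms \<and> split_first G ms"
    then obtain a r1 where p: "p = a # r1" by (cases p) auto
    have la: "legal G a" and sa: "sfmove G a" and r1: "game_path (apply_move G a) r1"
      "split_first (apply_move G a) r1" "length r1 = n"
      using h p by (auto simp: sf_cons)
    show "\<exists>e. game_path G (ms @ e) \<and> split_first G (ms @ e) \<and> length (ms @ e) = Suc n"
    proof (cases ms)
      case Nil
      then show ?thesis using h by auto
    next
      case (Cons b r2)
      have lb: "legal G b" and sb: "sfmove G b" and r2: "lp (apply_move G b) r2"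
        "split_first (apply_move G b) r2"
        using hm Cons by (auto simp: sf_cons)
      show ?thesis
      proof (cases "a = b")
        case True
        from Suc.IH[rule_format, OF conjI[OF r1(3) conjI[OF r1(1) r1(2)]], of r2] r2 True
        obtain e where "game_path (apply_move G b) (r2 @ e)" "split_first (apply_move G b) (r2 @ e)"
          "length (r2 @ e) = n" by auto
        then show ?thesis using Cons lb sb by (auto simp: sf_cons)
      next
        case False
        obtain m' where m': "legal G m'" "is_split m'" using sf_unique[OF sa sb False] by blast
        have isa: "is_split a" using sa m' unfolding sfmove_def by (metis (no_types))
        have isb: "is_split b" using sb m' unfolding sfmove_def by (metis (no_types))
        have c1: "legal (apply_move G a) b" and
          eq: "apply_move (apply_move G a) b = apply_move (apply_move G b) a"
          using commute[OF la lb isa isb False] by auto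
        have c2: "legal (apply_move G b) a"
          using commute[OF lb la isb isa] False by auto
        have "lp (apply_move G a) [b] \<and> split_first (apply_move G a) [b]"
          using c1 sf_split[OF c1 isb] by (simp add: sf_cons)
        from Suc.IH[rule_format, OF conjI[OF r1(3) conjI[OF r1(1) r1(2)]] this]
        obtain t where t: "game_path (apply_move G a) (b # t)" "split_first (apply_move G a) (b # t)"
          "length (b # t) = n" by auto
        have "game_path (apply_move G b) (a # t) \<and> split_first (apply_move G b) (a # t)"
          using t c2 sf_split[OF c2 isa] eq by (simp add: sf_cons)
        moreover have "length (a # t) = n" using t by simp
        ultimately obtain e where "game_path (apply_move G b) (r2 @ e)" "split_first (apply_move G b) (r2 @ e)"
          "length (r2 @ e) = n"
          using Suc.IH r2 by blast
        then show ?thesis using Cons lb sb by (auto simp: sf_cons)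
      qed
    qed
  qed
qed

theorem lemma2p2:
  fixes G :: "nat multiset" and ms1 ms2 :: "move list"
  assumes "\<forall>i \<in># G. i \<ge> 1"
    and "game_path G ms1" and "split_first G ms1"
    and "game_path G ms2" and "split_first G ms2"
  shows "length ms1 = length ms2"
proof -
  obtain e where e: "game_path G (ms2 @ e)" "length (ms2 @ e) = length ms1"
    using main[where n="length ms1"] assms(2,3,5) gp_lp[OF assms(4)] by blast
  have "terminal (foldl apply_move G ms2)"
    using assms(4) gp_app[of G ms2 "[]"] by simp
  then have "e = []" using e(1) gp_app[of G ms2 e]
    by (cases e) (auto simp: terminal_def)
  then show ?thesis using e by simp
qed

end
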